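(* Let $n\ge 6$ and let $G\in B^{+}_n$. (1) $\mathrm{irr}_t(G)\ge 2n-2$. Equality holds if and only if the degree sequence of $G$ is $(4,2,\ldots,2)$, i.e. one vertex of degree $4$ and $n-1$ vertices of degree $2$. (2) If the degree sequence of $G$ is not $(4,2,\ldots,2)$, then $\mathrm{irr}_t(G)\ge 4n-6$. Equality holds if and only if the degree sequence of $G$ is $(4,3,2,\ldots,2,1)$, i.e. one vertex of degree $4$, one of degree $3$, $n-3$ of degree $2$ and one of degree $1$.
   Context: A bicyclic graph is a simple connected graph whose number of edges equals its number of vertices plus one. For a graph $G=(V,E)$ and $w\in V$, $d_G(w)$ is the degree of $w$. The total irregularity is $\mathrm{irr}_t(G)=\frac12\sum_{x,y\in V}|d_G(x)-d_G(y)|$, where the sum runs over all ordered pairs of vertices. Degree sequences are listed in nonincreasing order. For $p,q\ge 3$ and $l\ge 1$, the $\infty$-graph $\infty(p,q,l)$ is obtained from two vertex-disjoint cycles $C_p$ and $C_q$ by joining a vertex of $C_p$ and a vertex of $C_q$ with a path having $l$ vertices (i.e. length $l-1$). When $l=1$ the two vertices are identified, so the cycles share exactly one vertex. $B^{+}_n$ denotes the set of bicyclic graphs on $n$ vertices obtained from some $\infty(p,q,1)$ by attaching trees. Equivalently, these are the bicyclic graphs on $n$ vertices whose two cycles share exactly one vertex. *)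

theory Defs
  imports Complex_Main "HOL-Library.Multiset"
begin

definition simple_graph :: "'a set \<Rightarrow> 'a set set \<Rightarrow> bool" where
  "simple_graph V E \<longleftrightarrow> finite V \<and> (\<forall>e\<in>E. e \<subseteq> V \<and> card e = 2)"

definition adj :: "'a set set \<Rightarrow> 'a \<Rightarrow> 'a \<Rightarrow> bool" where
  "adj E u v \<longleftrightarrow> {u, v} \<in> E"

definition connected_graph :: "'a set \<Rightarrow> 'a set set \<Rightarrow> bool" where
  "connected_graph V E \<longleftrightarrow> V \<noteq> {} \<and> (\<forall>u\<in>V. \<forall>v\<in>V. (adj E)\<^sup>*\<^sup>* u v)"

definition degree :: "'a set set \<Rightarrow> 'a \<Rightarrow> nat" where
  "degree E w = card {e \<in> E. w \<in> e}"

definition bicyclic :: "'a set \<Rightarrow> 'a set set \<Rightarrow> bool" where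
  "bicyclic V E \<longleftrightarrow> simple_graph V E \<and> connected_graph V E \<and> card E = card V + 1"

definition is_cycle :: "'a set set \<Rightarrow> 'a list \<Rightarrow> bool" where
  "is_cycle E cs \<longleftrightarrow> length cs \<ge> 3 \<and> distinct cs \<and>
     (\<forall>i < length cs. {cs ! i, cs ! ((i + 1) mod length cs)} \<in> E)"

text \<open>B^+_n (with n = card V): bicyclic graphs whose two cycles share exactly one vertex.\<close>
definition B_plus :: "'a set \<Rightarrow> 'a set set \<Rightarrow> bool" where
  "B_plus V E \<longleftrightarrow> bicyclic V E \<and>
     (\<exists>c1 c2. is_cycle E c1 \<and> is_cycle E c2 \<and> card (set c1 \<inter> set c2) = 1)"

definition total_irregularity :: "'a set \<Rightarrow> 'a set set \<Rightarrow> real" where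
  "total_irregularity V E =
     (1/2) * (\<Sum>x\<in>V. \<Sum>y\<in>V. \<bar>real (degree E x) - real (degree E y)\<bar>)"

text \<open>Degree sequence as a multiset (the nonincreasing list is its sorted form).\<close>
definition degree_seq :: "'a set \<Rightarrow> 'a set set \<Rightarrow> nat multiset" where
  "degree_seq V E = image_mset (degree E) (mset_set V)"

end

theory Submission
  imports Defs
begin

lemma count_img:
  assumes "finite V"
  shows "count (image_mset d (mset_set V)) k = card {x\<in>V. d x = k}"
  using assms
proof (induction V rule: finite_induct)
  case empty then show ?case by simp
next
  case (insert x F)
  have "{y\<in>insert x F. d y = k} = (if d x = k then insert x {y\<in>F. d y = k} else {y\<in>F. d y = k})"
    by auto
  then show ?case using insert by simp
qed

lemma thr:
  assumes "p \<le> M" "q \<le> M"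
  shows "\<bar>real p - real q\<bar> = real (card {t\<in>{..<M}. (t<p) \<noteq> (t<q)})"
proof (cases "p \<le> q")
  case True
  have "{t\<in>{..<M}. (t<p) \<noteq> (t<q)} = {p..<q}" using True assms by auto
  moreover have "real (q - p) = real q - real p" by (rule of_nat_diff[OF True])
  ultimately show ?thesis using True by simp
next
  case False
  have "{t\<in>{..<M}. (t<p) \<noteq> (t<q)} = {q..<p}" using False assms by auto
  moreover have "real (p - q) = real p - real q" using False by (simp add: of_nat_diff)
  ultimately show ?thesis using False by simp
qed

lemma card_as_sum: "finite A \<Longrightarrow> card {x\<in>A. P x} = (\<Sum>x\<in>A. if P x then 1 else 0)"
  by (simp add: sum.inter_filter[symmetric])

lemma sum_d:
  assumes "finite V" "\<forall>x\<in>V. d x \<le> M"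
  shows "sum d V = (\<Sum>t<M. card {x\<in>V. t < d x})"
proof -
  have "sum d V = (\<Sum>x\<in>V. \<Sum>t<M. if t < d x then 1 else 0)"
  proof (rule sum.cong)
    fix x assume "x \<in> V"
    then have "{t\<in>{..<M}. t < d x} = {..<d x}" using assms by auto
    then show "d x = (\<Sum>t<M. if t < d x then 1 else 0)"
      using card_as_sum[of "{..<M}" "\<lambda>t. t < d x"] by simp
  qed simp
  also have "\<dots> = (\<Sum>t<M. \<Sum>x\<in>V. if t < d x then 1 else 0)" by (rule sum.swap)
  also have "\<dots> = (\<Sum>t<M. card {x\<in>V. t < d x})"
    using card_as_sum[OF assms(1)] by simp
  finally show ?thesis .
qed

lemma aux2: "(a::nat) * b + b * a = 2 * a * b" by simp

lemma inner_pairs: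
  assumes "finite V"
  shows "(\<Sum>x\<in>V. \<Sum>y\<in>V. if (t < d x) \<noteq> (t < d y) then 1 else 0::nat)
     = 2 * card {x\<in>V. t < d x} * (card V - card {x\<in>V. t < d x})"
proof -
  let ?A = "{x\<in>V. t < d x}"
  have fA: "finite ?A" using assms by simp
  have sub: "?A \<subseteq> V" by auto
  have cA: "card (V - ?A) = card V - card ?A" using card_Diff_subset[OF fA sub] .
  have ina: "(\<Sum>y\<in>V. if (t < d x) \<noteq> (t < d y) then 1 else 0::nat) = card (V - ?A)" if "x \<in> ?A" for x
  proof -
    have "V - ?A = {y\<in>V. \<not> t < d y}" by auto
    then show ?thesis using that card_as_sum[OF assms, of "\<lambda>y. \<not> t < d y"] by simp
  qed
  have outa: "(\<Sum>y\<in>V. if (t < d x) \<noteq> (t < d y) then 1 else 0::nat) = card ?A" if "x \<in> V - ?A" for x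
    using that card_as_sum[OF assms, of "\<lambda>y. t < d y"] by simp
  have "(\<Sum>x\<in>V. \<Sum>y\<in>V. if (t < d x) \<noteq> (t < d y) then 1 else 0::nat)
     = (\<Sum>x\<in>V - ?A. \<Sum>y\<in>V. if (t < d x) \<noteq> (t < d y) then 1 else 0::nat)
       + (\<Sum>x\<in>?A. \<Sum>y\<in>V. if (t < d x) \<noteq> (t < d y) then 1 else 0::nat)"
    by (rule sum.subset_diff[OF sub assms])
  also have "\<dots> = (\<Sum>x\<in>V - ?A. card ?A) + (\<Sum>x\<in>?A. card (V - ?A))"
    by (simp only: sum.cong[OF refl ina, of ?A] sum.cong[OF refl outa, of "V - ?A"])
  also have "\<dots> = card ?A * card (V - ?A) + card (V - ?A) * card ?A"
    by simp
  also have "\<dots> = 2 * card ?A * card (V - ?A)"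
    using aux2[of "card ?A" "card (V - ?A)"] by argo
  finally show ?thesis unfolding cA .
qed

lemma irr_formula:
  assumes "finite V" "\<forall>x\<in>V. d x \<le> M"
  shows "(\<Sum>x\<in>V. \<Sum>y\<in>V. \<bar>real (d x) - real (d y)\<bar>)
     = real (\<Sum>t<M. 2 * card {x\<in>V. t < d x} * (card V - card {x\<in>V. t < d x}))"
proof -
  have "(\<Sum>x\<in>V. \<Sum>y\<in>V. \<bar>real (d x) - real (d y)\<bar>)
     = real (\<Sum>x\<in>V. \<Sum>y\<in>V. \<Sum>t<M. if (t < d x) \<noteq> (t < d y) then 1 else 0::nat)"
  proof -
    have pw: "\<bar>real (d x) - real (d y)\<bar> = real (\<Sum>t<M. if (t < d x) \<noteq> (t < d y) then 1 else 0::nat)"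
      if "x \<in> V" "y \<in> V" for x y
      using that thr[of "d x" M "d y"] assms card_as_sum[of "{..<M}" "\<lambda>t. (t < d x) \<noteq> (t < d y)"] by simp
    have "(\<Sum>x\<in>V. \<Sum>y\<in>V. \<bar>real (d x) - real (d y)\<bar>)
       = (\<Sum>x\<in>V. \<Sum>y\<in>V. real (\<Sum>t<M. if (t < d x) \<noteq> (t < d y) then 1 else 0::nat))"
      using pw by simp
    also have "\<dots> = real (\<Sum>x\<in>V. \<Sum>y\<in>V. \<Sum>t<M. if (t < d x) \<noteq> (t < d y) then 1 else 0::nat)"
      by (simp only: of_nat_sum)
    finally show ?thesis .
  qed
  also have "(\<Sum>x\<in>V. \<Sum>y\<in>V. \<Sum>t<M. if (t < d x) \<noteq> (t < d y) then 1 else 0::nat)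
      = (\<Sum>t<M. \<Sum>x\<in>V. \<Sum>y\<in>V. if (t < d x) \<noteq> (t < d y) then 1 else 0::nat)"
  proof -
    have "(\<Sum>x\<in>V. \<Sum>y\<in>V. \<Sum>t<M. if (t < d x) \<noteq> (t < d y) then 1 else 0::nat)
       = (\<Sum>x\<in>V. \<Sum>t<M. \<Sum>y\<in>V. if (t < d x) \<noteq> (t < d y) then 1 else 0::nat)"
      by (rule sum.cong[OF refl], rule sum.swap)
    also have "\<dots> = (\<Sum>t<M. \<Sum>x\<in>V. \<Sum>y\<in>V. if (t < d x) \<noteq> (t < d y) then 1 else 0::nat)"
      by (rule sum.swap)
    finally show ?thesis .
  qed
  also have "\<dots> = (\<Sum>t<M. 2 * card {x\<in>V. t < d x} * (card V - card {x\<in>V. t < d x}))"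
    by (rule sum.cong[OF refl], rule inner_pairs[OF assms(1)])
  finally show ?thesis .
qed

lemma split5:
  assumes "5 \<le> (M::nat)"
  shows "(\<Sum>t<M. f t) = f 0 + f 1 + f 2 + f 3 + f 4 + (\<Sum>t\<in>{5..<M}. f t)"
  using assms
proof (induction M rule: nat_induct_at_least)
  case base
  then show ?case by (simp add: numeral_eq_Suc)
next
  case (Suc m)
  then show ?case by (simp add: ac_simps)
qed

lemma prodlb1:
  assumes "1 \<le> (x::nat)" "x + 1 \<le> n"
  shows "n - 1 \<le> x * (n - x)"
proof -
  obtain y where y: "x = y + 1" using assms(1) by (metis add.commute le_Suc_ex Suc_eq_plus1_left)
  obtain z where z: "n = x + 1 + z" using assms(2) le_Suc_ex by (metis le_add_diff_inverse)
  show ?thesis unfolding y z by (simp add: algebra_simps)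
qed

lemma prodlb2:
  assumes "2 \<le> (x::nat)" "x + 2 \<le> n"
  shows "2 * (n - 2) \<le> x * (n - x)"
proof -
  obtain y where y: "x = y + 2" using assms(1) by (metis add.commute le_add_diff_inverse)
  obtain z where z: "n = x + 2 + z" using assms(2) by (metis le_add_diff_inverse)
  show ?thesis unfolding y z by (simp add: algebra_simps)
qed


lemma pure:
  fixes V :: "'a set" and d :: "'a \<Rightarrow> nat" and n :: nat
  assumes fin: "finite V" and cV: "card V = n" and n6: "n \<ge> 6"
    and sd: "sum d V = 2*n+2" and pos: "\<forall>x\<in>V. d x \<ge> 1" and wV: "w \<in> V" and w4: "d w \<ge> 4"
  defines "I \<equiv> (1/2) * (\<Sum>x\<in>V. \<Sum>y\<in>V. \<bar>real (d x) - real (d y)\<bar>)"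
    and "D \<equiv> image_mset d (mset_set V)"
  shows "I \<ge> 2 * real n - 2
     \<and> (I = 2 * real n - 2 \<longleftrightarrow> D = {#4#} + replicate_mset (n - 1) 2)
     \<and> (D \<noteq> {#4#} + replicate_mset (n - 1) 2 \<longrightarrow>
          I \<ge> 4 * real n - 6
          \<and> (I = 4 * real n - 6 \<longleftrightarrow> D = {#4, 3, 1#} + replicate_mset (n - 3) 2))"
proof -
  define M where "M = 2*n+2"
  define a where "a t = card {x\<in>V. t < d x}" for t
  define T where "T t = a t * (n - a t)" for t
  have bnd: "\<forall>x\<in>V. d x \<le> M"
    using member_le_sum[of _ V d] fin sd unfolding M_def by fastforce
  have M5: "5 \<le> M" using n6 unfolding M_def by simp
  have Ieq: "I = real (\<Sum>t<M. T t)"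
  proof -
    have "I = (1/2) * real (\<Sum>t<M. 2 * a t * (n - a t))"
      unfolding I_def irr_formula[OF fin bnd] a_def cV by simp
    also have "(\<Sum>t<M. 2 * a t * (n - a t)) = 2 * (\<Sum>t<M. T t)"
      unfolding T_def by (simp add: sum_distrib_left mult.assoc)
    finally show ?thesis by simp
  qed
  have sumA: "(\<Sum>t<M. a t) = 2*n+2"
    using sum_d[OF fin bnd] sd unfolding a_def by simp
  have mono: "a t \<le> a s" if "s \<le> t" for s t
    unfolding a_def by (rule card_mono) (use fin that in auto)
  have ale: "a t \<le> n" for t
    unfolding a_def cV[symmetric] by (rule card_mono) (use fin in auto)
  have a0: "a 0 = n"
  proof -
    have "{x\<in>V. 0 < d x} = V" using pos by auto
    then show ?thesis unfolding a_def using cV by simp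
  qed
  have a3: "1 \<le> a 3"
  proof -
    have "w \<in> {x\<in>V. 3 < d x}" using wV w4 by auto
    then have "{x\<in>V. 3 < d x} \<noteq> {}" by blast
    then show ?thesis unfolding a_def using fin by (simp add: Suc_le_eq card_gt_0_iff)
  qed
  have cnt: "count D k = card {x\<in>V. d x = k}" for k
    unfolding D_def by (rule count_img[OF fin])
  have cnt0: "count D 0 = 0"
  proof -
    have e: "{x\<in>V. d x = 0} = {}" using pos by fastforce
    show ?thesis unfolding cnt e by simp
  qed
  have cntS: "count D (Suc k) = a k - a (Suc k)" for k
  proof -
    have "{x\<in>V. k < d x} = {x\<in>V. d x = Suc k} \<union> {x\<in>V. Suc k < d x}" by auto
    moreover have "{x\<in>V. d x = Suc k} \<inter> {x\<in>V. Suc k < d x} = {}" by auto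
    ultimately have "a k = card {x\<in>V. d x = Suc k} + a (Suc k)"
      unfolding a_def using fin by (simp add: card_Un_disjoint)
    then show ?thesis using cnt by simp
  qed
  have memD: "d v \<in># D" if "v \<in> V" for v
    unfolding D_def using fin that by simp
  have ssum: "(\<Sum>t<M. f t) = f 0 + f 1 + f 2 + f 3 + f 4 + (\<Sum>t\<in>{5..<M}. f t)" for f :: "nat \<Rightarrow> nat"
    by (rule split5[OF M5])
  have Tlb1: "n - 1 \<le> T t" if "1 \<le> a t" "a t + 1 \<le> n" for t
    unfolding T_def using prodlb1[OF that] .
  have Tlb2: "2 * (n - 2) \<le> T t" if "2 \<le> a t" "a t + 2 \<le> n" for t
    unfolding T_def using prodlb2[OF that] .
  have a23: "a 3 \<le> a 2" "a 2 \<le> a 1" "a 4 \<le> a 3" "a 1 \<le> a 0" using mono by auto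
  show ?thesis
  proof (cases "a 1 = n")
    case True
    have s: "a 0 + a 1 + a 2 + a 3 + a 4 + (\<Sum>t\<in>{5..<M}. a t) = 2*n+2"
      using sumA ssum[of a] by simp
    then have a2: "a 2 = 1" "a 3 = 1" "a 4 = 0" using True a0 a3 a23 by auto
    have az: "a t = 0" if "4 \<le> t" for t using mono[OF that] a2 by simp
    have Tz: "(\<Sum>t\<in>{5..<M}. T t) = 0" using az unfolding T_def by simp
    have Is: "(\<Sum>t<M. T t) + 2 = 2 * n"
      using ssum[of T] Tz True a0 a2 n6 unfolding T_def by simp
    have IV: "I = 2 * real n - 2"
    proof -
      have "real ((\<Sum>t<M. T t) + 2) = real (2*n)" by (rule arg_cong[OF Is])
      then show ?thesis using Ieq by simp
    qed
    have DS: "D = {#4#} + replicate_mset (n - 1) 2"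
    proof (rule multiset_eqI)
      fix k
      show "count D k = count ({#4#} + replicate_mset (n - 1) 2) k"
      proof (cases k)
        case 0 then show ?thesis using cnt0 by simp
      next
        case (Suc j)
        have "j = 0 \<or> j = 1 \<or> j = 2 \<or> j = 3 \<or> j \<ge> 4" by auto
        then show ?thesis unfolding Suc cntS using True a0 a2 az[of j] az[of "Suc j"]
          by (auto simp: numeral_eq_Suc)
      qed
    qed
    show ?thesis using IV DS by simp
  next
    case False
    then have a1l: "a 1 + 1 \<le> n" using ale[of 1] by simp
    have leaf: "\<exists>v\<in>V. d v = 1"
    proof -
      have "count D (Suc 0) = n - a 1" using cntS[of 0] a0 by simp
      then have "count D 1 > 0" using a1l by simp
      then have "card {x\<in>V. d x = 1} > 0" using cnt by simp
      then show ?thesis by (metis (mono_tags, lifting) card_gt_0_iff empty_Collect_eq mem_Collect_eq)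
    qed
    have notS1: "D \<noteq> {#4#} + replicate_mset (n - 1) 2"
    proof
      assume "D = {#4#} + replicate_mset (n - 1) 2"
      moreover obtain v where "v \<in> V" "d v = 1" using leaf by blast
      ultimately have "(1::nat) \<in># {#4#} + replicate_mset (n - 1) 2" using memD by metis
      then show False by (auto split: if_splits)
    qed
    show ?thesis
    proof (cases "a 4 \<ge> 1")
      case True
      have T14: "n - 1 \<le> T 1" "n - 1 \<le> T 2" "n - 1 \<le> T 3" "n - 1 \<le> T 4"
        using Tlb1 True a23 a1l by auto
      have "4 * n \<le> (\<Sum>t<M. T t) + 4" using ssum[of T] T14 n6 by simp
      then have "real (4 * n) \<le> real ((\<Sum>t<M. T t) + 4)" by (simp only: of_nat_le_iff)
      then have Ige: "4 * real n - 4 \<le> I" using Ieq by simp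
      obtain v where v: "v \<in> V" "4 < d v"
      proof -
        have "{x\<in>V. 4 < d x} \<noteq> {}" using True unfolding a_def by (metis card.empty not_one_le_zero)
        then show ?thesis using that by blast
      qed
      have notS2: "D \<noteq> {#4, 3, 1#} + replicate_mset (n - 3) 2"
      proof
        assume "D = {#4, 3, 1#} + replicate_mset (n - 3) 2"
        then have "d v \<in># {#4, 3, 1#} + replicate_mset (n - 3) 2" using memD[OF v(1)] by simp
        then show False using v(2) by (auto split: if_splits)
      qed
      show ?thesis using Ige notS1 notS2 n6 by auto
    next
      case False
      then have a4: "a 4 = 0" by simp
      have az: "a t = 0" if "4 \<le> t" for t using mono[OF that] a4 by simp
      have Tz: "(\<Sum>t\<in>{5..<M}. T t) = 0" using az unfolding T_def by simp
      have Az: "(\<Sum>t\<in>{5..<M}. a t) = 0" using az by simp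
      have s: "n + a 1 + a 2 + a 3 = 2*n+2"
        using sumA ssum[of a] Az a0 a4 by simp
      have Isum: "(\<Sum>t<M. T t) = T 1 + T 2 + T 3"
        using ssum[of T] Tz a0 a4 unfolding T_def by simp
      show ?thesis
      proof (cases "a 1 + 1 = n")
        case True
        then have a2: "a 2 = 2" "a 3 = 1" using s a3 a23 by auto
        have Is: "(\<Sum>t<M. T t) + 6 = 4 * n"
        proof -
          have "n - a 1 = 1" using True by simp
          then have t1: "T 1 = n - 1" unfolding T_def using True by simp
          have t2: "T 2 = 2 * (n - 2)" unfolding T_def using a2 by simp
          have t3: "T 3 = n - 1" unfolding T_def using a2 by simp
          show ?thesis using Isum t1 t2 t3 n6 by simp
        qed
        have IV: "I = 4 * real n - 6"
        proof -
          have "real ((\<Sum>t<M. T t) + 6) = real (4*n)" by (rule arg_cong[OF Is])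
          then show ?thesis using Ieq by simp
        qed
        have DS: "D = {#4, 3, 1#} + replicate_mset (n - 3) 2"
        proof (rule multiset_eqI)
          fix k
          show "count D k = count ({#4, 3, 1#} + replicate_mset (n - 3) 2) k"
          proof (cases k)
            case 0 then show ?thesis using cnt0 by simp
          next
            case (Suc j)
            have "j = 0 \<or> j = 1 \<or> j = 2 \<or> j = 3 \<or> j \<ge> 4" by auto
            then show ?thesis unfolding Suc cntS using True a0 a2 az[of j] az[of "Suc j"] n6
              by (auto simp: numeral_eq_Suc)
          qed
        qed
        show ?thesis using IV DS notS1 n6 by auto
      next
        case False
        then have a1: "a 1 + 2 \<le> n" using a1l by simp
        have a2: "2 \<le> a 2" using s a1 a23 by auto
        have "2 * (n - 2) \<le> T 1" using Tlb2[of 1] a2 a23 a1 by simp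
        moreover have "2 * (n - 2) \<le> T 2" using Tlb2[of 2] a2 a23 a1 by simp
        moreover have "n - 1 \<le> T 3" using Tlb1[of 3] a3 a23 a1 by simp
        ultimately have "5 * n \<le> (\<Sum>t<M. T t) + 9" using Isum n6 by simp
        then have "real (5 * n) \<le> real ((\<Sum>t<M. T t) + 9)" by (simp only: of_nat_le_iff)
        then have Ige: "5 * real n \<le> I + 9" using Ieq by simp
        have c1: "count D 1 \<ge> 2" using cntS[of 0] a0 a1 by simp
        have notS2: "D \<noteq> {#4, 3, 1#} + replicate_mset (n - 3) 2"
        proof
          assume "D = {#4, 3, 1#} + replicate_mset (n - 3) 2"
          then have "count D 1 = 1" by simp
          then show False using c1 by simp
        qed
        show ?thesis using Ige notS1 notS2 n6 by auto
      qed
    qed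
  qed
qed




lemma finE: "simple_graph V E \<Longrightarrow> finite E"
  unfolding simple_graph_def by (meson Pow_iff finite_Pow_iff finite_subset subsetI)

lemma handshake:
  assumes sg: "simple_graph V E"
  shows "sum (degree E) V = 2 * card E"
proof -
  have fV: "finite V" using sg unfolding simple_graph_def by simp
  have fE: "finite E" using finE[OF sg] .
  have "sum (degree E) V = (\<Sum>x\<in>V. \<Sum>e\<in>E. if x \<in> e then 1 else 0)"
    unfolding degree_def using card_as_sum[OF fE] by simp
  also have "\<dots> = (\<Sum>e\<in>E. \<Sum>x\<in>V. if x \<in> e then 1 else 0)" by (rule sum.swap)
  also have "\<dots> = (\<Sum>e\<in>E. 2)"
  proof (rule sum.cong[OF refl])
    fix e assume "e \<in> E"
    then have "e \<subseteq> V" "card e = 2" using sg unfolding simple_graph_def by auto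
    then have "{x\<in>V. x \<in> e} = e" by auto
    then show "(\<Sum>x\<in>V. if x \<in> e then 1 else 0) = (2::nat)"
      using card_as_sum[OF fV, of "\<lambda>x. x \<in> e"] \<open>card e = 2\<close> by simp
  qed
  finally show ?thesis by simp
qed

lemma deg_pos:
  assumes b: "bicyclic V E" and c2: "card V \<ge> 2" and x: "x \<in> V"
  shows "degree E x \<ge> 1"
proof -
  have sg: "simple_graph V E" using b unfolding bicyclic_def by simp
  have fV: "finite V" using sg unfolding simple_graph_def by simp
  obtain y where y: "y \<in> V" "y \<noteq> x"
  proof (rule ccontr)
    assume "\<not> thesis"
    then have "V \<subseteq> {x}" using that by blast
    then have "card V \<le> card {x}" by (intro card_mono) auto
    then have "card V \<le> 1" by simp
    then show False using c2 by simp
  qed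
  have "(adj E)\<^sup>*\<^sup>* x y" using b x y unfolding bicyclic_def connected_graph_def by blast
  then obtain z where "adj E x z"
    by (cases rule: converse_rtranclpE) (use y in auto)
  then have "{x, z} \<in> {e\<in>E. x \<in> e}" unfolding adj_def by simp
  moreover have "finite {e\<in>E. x \<in> e}" using finE[OF sg] by simp
  ultimately have "card {e\<in>E. x \<in> e} > 0" using card_gt_0_iff by blast
  then show ?thesis unfolding degree_def by simp
qed

lemma cyc_nb:
  assumes c: "is_cycle E cs" and i: "i < length cs"
  shows "\<exists>a b. a \<noteq> b \<and> a \<in> set cs \<and> b \<in> set cs \<and> a \<noteq> cs!i \<and> b \<noteq> cs!i
     \<and> {cs!i, a} \<in> E \<and> {cs!i, b} \<in> E"
proof -
  let ?L = "length cs"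
  have L3: "?L \<ge> 3" and dist: "distinct cs"
    and ed: "\<And>j. j < ?L \<Longrightarrow> {cs ! j, cs ! ((j + 1) mod ?L)} \<in> E"
    using c unfolding is_cycle_def by auto
  define p where "p = (if i + 1 < ?L then i + 1 else 0)"
  define q where "q = (if i = 0 then ?L - 1 else i - 1)"
  have pL: "p < ?L" and qL: "q < ?L" unfolding p_def q_def using L3 i by auto
  have pm: "(i + 1) mod ?L = p"
  proof (cases "i + 1 < ?L")
    case True then show ?thesis unfolding p_def by simp
  next
    case False then have "i + 1 = ?L" using i by simp
    then show ?thesis unfolding p_def by simp
  qed
  have qm: "(q + 1) mod ?L = i" unfolding q_def using i L3 by auto
  have pi: "p \<noteq> i" and qi: "q \<noteq> i" and pq: "p \<noteq> q"
    unfolding p_def q_def using i L3 by auto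
  have e1: "{cs!i, cs!p} \<in> E" using ed[OF i] pm by simp
  have e2: "{cs!i, cs!q} \<in> E" using ed[OF qL] qm by (simp add: insert_commute)
  have n1: "cs!p \<noteq> cs!i" "cs!q \<noteq> cs!i" "cs!p \<noteq> cs!q"
    using nth_eq_iff_index_eq[OF dist] pL qL i pi qi pq by auto
  show ?thesis
    by (rule exI[of _ "cs!p"], rule exI[of _ "cs!q"]) (use n1 e1 e2 pL qL in auto)
qed

lemma deg4:
  assumes sg: "simple_graph V E" and c1: "is_cycle E c1" and c2: "is_cycle E c2"
    and one: "card (set c1 \<inter> set c2) = 1"
  shows "\<exists>w\<in>V. degree E w \<ge> 4"
proof -
  obtain w where w: "set c1 \<inter> set c2 = {w}" using one card_1_singletonE by blast
  then have w1: "w \<in> set c1" and w2: "w \<in> set c2" by auto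
  obtain i where i: "i < length c1" "c1 ! i = w" using w1 by (metis in_set_conv_nth)
  obtain j where j: "j < length c2" "c2 ! j = w" using w2 by (metis in_set_conv_nth)
  obtain a b where ab: "a \<noteq> b" "a \<in> set c1" "b \<in> set c1" "a \<noteq> w" "b \<noteq> w" "{w, a} \<in> E" "{w, b} \<in> E"
    using cyc_nb[OF c1 i(1)] i(2) by blast
  obtain c d where cd: "c \<noteq> d" "c \<in> set c2" "d \<in> set c2" "c \<noteq> w" "d \<noteq> w" "{w, c} \<in> E" "{w, d} \<in> E"
    using cyc_nb[OF c2 j(1)] j(2) by blast
  have dis: "a \<noteq> c" "a \<noteq> d" "b \<noteq> c" "b \<noteq> d" using w ab cd by blast+
  have sub: "{{w,a},{w,b},{w,c},{w,d}} \<subseteq> {e\<in>E. w \<in> e}" using ab cd by auto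
  have c4: "card {{w,a},{w,b},{w,c},{w,d}} = 4"
    using ab cd dis by (simp add: doubleton_eq_iff)
  have "4 \<le> card {e\<in>E. w \<in> e}"
    using card_mono[OF _ sub] finE[OF sg] c4 by simp
  moreover have "w \<in> V" using ab(6) sg unfolding simple_graph_def by blast
  ultimately show ?thesis unfolding degree_def by blast
qed


theorem theorem12:
  fixes V :: "'a set" and E :: "'a set set" and n :: nat
  assumes "B_plus V E" and "card V = n" and "n \<ge> 6"
  shows "total_irregularity V E \<ge> 2 * real n - 2
     \<and> (total_irregularity V E = 2 * real n - 2 \<longleftrightarrow>
          degree_seq V E = {#4#} + replicate_mset (n - 1) 2)
     \<and> (degree_seq V E \<noteq> {#4#} + replicate_mset (n - 1) 2 \<longrightarrow>
          total_irregularity V E \<ge> 4 * real n - 6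
          \<and> (total_irregularity V E = 4 * real n - 6 \<longleftrightarrow>
               degree_seq V E = {#4, 3, 1#} + replicate_mset (n - 3) 2))"
proof -
  have b: "bicyclic V E" using assms(1) unfolding B_plus_def by simp
  obtain c1 c2 where c: "is_cycle E c1" "is_cycle E c2" "card (set c1 \<inter> set c2) = 1"
    using assms(1) unfolding B_plus_def by blast
  have sg: "simple_graph V E" using b unfolding bicyclic_def by simp
  have fin: "finite V" using sg unfolding simple_graph_def by simp
  have sd: "sum (degree E) V = 2 * n + 2"
    using handshake[OF sg] b assms(2) unfolding bicyclic_def by simp
  have pos: "\<forall>x\<in>V. degree E x \<ge> 1"
    using deg_pos[OF b] assms(2,3) by simp
  obtain w where w: "w \<in> V" "degree E w \<ge> 4" using deg4[OF sg c] by blast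
  show ?thesis
    unfolding total_irregularity_def degree_seq_def
    by (rule pure[OF fin assms(2) assms(3) sd pos w])
qed

end
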